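(* Let $t,w,w',n,g$ be positive integers with $t\le w\le w'$. Suppose that there exists a $t$-resolvable Steiner system $\mathrm{S}(w,w',n)$. If there exists a large set $\mathrm{LGS}(t,w,w',g)$, then there exists a large set $\mathrm{LGS}(t,w,n,g)$.
   Context: A Steiner system $\mathrm{S}(s,k,n)$ is a pair $(X,\mathcal{B})$ with $|X|=n$ and $\mathcal{B}$ a family of $k$-subsets (blocks) of $X$ such that every $s$-subset of $X$ lies in exactly one block. An $\mathrm{S}(w,w',n)$ $(X,\mathcal{B})$ is $t$-resolvable ($t\le w$) if $\mathcal{B}$ can be partitioned into subfamilies each of which is the block set of an $\mathrm{S}(t,w',n)$ on $X$. For a set $Y$ of size $m$, let $X=Y\times[g]$ with groups $\{y\}\times[g]$. An H-design $\mathrm{H}(m,g,w,t)$ is a family of $w$-subsets (blocks) of $X$, each meeting every group in at most one point, such that every $t$-subset of $X$ with points in $t$ distinct groups lies in exactly one block. A block $\{(y_1,a_1),\dots,(y_w,a_w)\}$ is identified with the word indexed by $Y$ over $\{0\}\cup[g]$ having entry $a_s$ at coordinate $y_s$ and $0$ elsewhere. A generalized Steiner system $\mathrm{GS}(t,w,m,g)$ is an $\mathrm{H}(m,g,w,t)$ in which any two distinct blocks have Hamming distance at least $2(w-t)+1$. A large set $\mathrm{LGS}(t,w,m,g)$ is a partition of the set of all $w$-subsets of $Y\times[g]$ meeting each group in at most one point into block sets of $\mathrm{GS}(t,w,m,g)$'s (on the same groups). *)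

theory Defs
  imports Main "HOL-Library.Disjoint_Sets"
begin

definition steiner_system :: "nat \<Rightarrow> nat \<Rightarrow> 'a set \<Rightarrow> 'a set set \<Rightarrow> bool" where
  "steiner_system s k X B \<longleftrightarrow>
     (\<forall>b\<in>B. b \<subseteq> X \<and> card b = k) \<and>
     (\<forall>S. S \<subseteq> X \<and> card S = s \<longrightarrow> (\<exists>!b. b \<in> B \<and> S \<subseteq> b))"

definition t_resolvable :: "nat \<Rightarrow> nat \<Rightarrow> nat \<Rightarrow> 'a set \<Rightarrow> 'a set set \<Rightarrow> bool" where
  "t_resolvable t w w' X B \<longleftrightarrow> steiner_system w w' X B \<and>
     (\<exists>P. partition_on B P \<and> (\<forall>C\<in>P. steiner_system t w' X C))"

(* points of Y x [g]; groups are {y} x [g] *)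
definition hpoints :: "'a set \<Rightarrow> nat \<Rightarrow> ('a \<times> nat) set" where
  "hpoints Y g = Y \<times> {1..g}"

definition transversal_sets :: "nat \<Rightarrow> 'a set \<Rightarrow> nat \<Rightarrow> ('a \<times> nat) set set" where
  "transversal_sets w Y g =
     {b. b \<subseteq> hpoints Y g \<and> card b = w \<and> (\<forall>y\<in>Y. card {a. (y, a) \<in> b} \<le> 1)}"

definition H_design :: "'a set \<Rightarrow> nat \<Rightarrow> nat \<Rightarrow> nat \<Rightarrow> ('a \<times> nat) set set \<Rightarrow> bool" where
  "H_design Y g w t B \<longleftrightarrow> B \<subseteq> transversal_sets w Y g \<and>
     (\<forall>S. S \<subseteq> hpoints Y g \<and> card S = t \<and> card (fst ` S) = t \<longrightarrow> (\<exists>!b. b \<in> B \<and> S \<subseteq> b))"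

(* the word indexed by Y over {0} \<union> [g] associated with a block *)
definition block_word :: "('a \<times> nat) set \<Rightarrow> 'a \<Rightarrow> nat" where
  "block_word b y = (if \<exists>a. (y, a) \<in> b then (THE a. (y, a) \<in> b) else 0)"

definition hamming :: "'a set \<Rightarrow> ('a \<times> nat) set \<Rightarrow> ('a \<times> nat) set \<Rightarrow> nat" where
  "hamming Y b c = card {y\<in>Y. block_word b y \<noteq> block_word c y}"

definition GS :: "nat \<Rightarrow> nat \<Rightarrow> 'a set \<Rightarrow> nat \<Rightarrow> ('a \<times> nat) set set \<Rightarrow> bool" where
  "GS t w Y g B \<longleftrightarrow> H_design Y g w t B \<and>
     (\<forall>b\<in>B. \<forall>c\<in>B. b \<noteq> c \<longrightarrow> hamming Y b c \<ge> 2 * (w - t) + 1)"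

definition LGS :: "nat \<Rightarrow> nat \<Rightarrow> 'a set \<Rightarrow> nat \<Rightarrow> ('a \<times> nat) set set set \<Rightarrow> bool" where
  "LGS t w Y g P \<longleftrightarrow> partition_on (transversal_sets w Y g) P \<and> (\<forall>B\<in>P. GS t w Y g B)"

definition LGS_exists :: "nat \<Rightarrow> nat \<Rightarrow> nat \<Rightarrow> nat \<Rightarrow> bool" where
  "LGS_exists t w m g \<longleftrightarrow> (\<exists>(Y::nat set) P. finite Y \<and> card Y = m \<and> LGS t w Y g P)"

end

theory Submission
  imports Defs
begin


abbreviation tr :: "('a \<Rightarrow> 'b) \<Rightarrow> 'a \<times> nat \<Rightarrow> 'b \<times> nat" where
  "tr h \<equiv> map_prod h id"

lemma trans_sub: "b \<in> transversal_sets w Y g \<Longrightarrow> b \<subseteq> Y \<times> {1..g}"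
  by (simp add: transversal_sets_def hpoints_def)

lemma trans_subU: "b \<in> transversal_sets w Y g \<Longrightarrow> b \<subseteq> Y \<times> UNIV"
  using trans_sub by blast

lemma tr_mem:
  assumes "inj_on h Y" "T \<subseteq> Y \<times> UNIV" "y \<in> Y"
  shows "(h y, a) \<in> tr h ` T \<longleftrightarrow> (y, a) \<in> T"
proof
  assume "(h y, a) \<in> tr h ` T"
  then obtain p where p': "(h y, a) = tr h p" "p \<in> T" by (rule imageE)
  note p = p'(2) p'(1)
  obtain y' a' where pp: "p = (y', a')" by (cases p)
  have y': "y' \<in> Y" using assms(2) p(1) pp by blast
  have e: "h y = h y'" "a = a'" using p(2) pp by simp_all
  have "y = y'" using inj_onD[OF assms(1) e(1) assms(3) y'] .
  then show "(y, a) \<in> T" using p(1) pp e(2) by simp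
next
  assume "(y, a) \<in> T"
  then show "(h y, a) \<in> tr h ` T" by (rule rev_image_eqI) simp
qed

lemma bw_tr:
  assumes "inj_on h Y" "T \<subseteq> Y \<times> UNIV" "y \<in> Y"
  shows "block_word (tr h ` T) (h y) = block_word T y"
  unfolding block_word_def using tr_mem[OF assms] by simp

lemma inj_tr: "inj_on h Y \<Longrightarrow> inj_on (tr h) (Y \<times> UNIV)"
  by (auto simp: inj_on_def)

lemma hamming_tr:
  assumes "bij_betw h Y Z" "T1 \<subseteq> Y \<times> UNIV" "T2 \<subseteq> Y \<times> UNIV"
  shows "hamming Z (tr h ` T1) (tr h ` T2) = hamming Y T1 T2"
proof -
  have inj: "inj_on h Y" and Z: "h ` Y = Z" using assms(1) by (auto simp: bij_betw_def)
  have "{z\<in>Z. block_word (tr h ` T1) z \<noteq> block_word (tr h ` T2) z}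
        = h ` {y\<in>Y. block_word T1 y \<noteq> block_word T2 y}"
    using bw_tr[OF inj assms(2)] bw_tr[OF inj assms(3)] Z by auto
  moreover have "card (h ` {y\<in>Y. block_word T1 y \<noteq> block_word T2 y})
      = card {y\<in>Y. block_word T1 y \<noteq> block_word T2 y}"
    by (rule card_image) (use inj in \<open>auto intro: inj_on_subset\<close>)
  ultimately show ?thesis unfolding hamming_def by simp
qed

lemma trans_tr:
  assumes "bij_betw h Y Z" "T \<in> transversal_sets w Y g"
  shows "tr h ` T \<in> transversal_sets w Z g"
proof -
  have inj: "inj_on h Y" and Z: "h ` Y = Z" using assms(1) by (auto simp: bij_betw_def)
  have T: "T \<subseteq> Y \<times> {1..g}" "card T = w" "\<forall>y\<in>Y. card {a. (y,a)\<in>T} \<le> 1"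
    using assms(2) by (auto simp: transversal_sets_def hpoints_def)
  have "tr h ` T \<subseteq> Z \<times> {1..g}" using T Z by auto
  moreover have "card (tr h ` T) = w"
    using card_image[OF inj_on_subset[OF inj_tr[OF inj]], of T] T by auto
  moreover have "\<forall>z\<in>Z. card {a. (z,a) \<in> tr h ` T} \<le> 1"
  proof
    fix z assume "z \<in> Z" then obtain y where y: "y\<in>Y" "z = h y" using Z by auto
    have TY: "T \<subseteq> Y \<times> UNIV" using T by auto
    have "{a. (z,a) \<in> tr h ` T} = {a. (y,a) \<in> T}"
      using tr_mem[OF inj TY y(1)] y by auto
    then show "card {a. (z,a) \<in> tr h ` T} \<le> 1" using T y by simp
  qed
  ultimately show ?thesis by (simp add: transversal_sets_def hpoints_def)
qed

lemma inv_tr1: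
  assumes "bij_betw h Y Z" "T \<subseteq> Y \<times> UNIV"
  shows "tr (inv_into Y h) ` tr h ` T = T"
proof -
  have inj: "inj_on h Y" using assms(1) by (auto simp: bij_betw_def)
  have "\<And>x. x \<in> T \<Longrightarrow> tr (inv_into Y h) (tr h x) = x"
    using assms(2) inv_into_f_f[OF inj] by (auto simp: map_prod_def split: prod.splits)
  then show ?thesis by (simp add: image_image)
qed

lemma inv_tr2:
  assumes "bij_betw h Y Z" "T \<subseteq> Z \<times> UNIV"
  shows "tr h ` tr (inv_into Y h) ` T = T"
proof -
  have Z: "h ` Y = Z" using assms(1) by (auto simp: bij_betw_def)
  have "\<And>x. x \<in> T \<Longrightarrow> tr h (tr (inv_into Y h) x) = x"
    using assms(2) f_inv_into_f[of _ h Y] Z by (auto simp: map_prod_def split: prod.splits)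
  then show ?thesis by (simp add: image_image)
qed

lemma trans_surj:
  assumes "bij_betw h Y Z"
  shows "transversal_sets w Z g = image (tr h) ` transversal_sets w Y g"
proof
  show "image (tr h) ` transversal_sets w Y g \<subseteq> transversal_sets w Z g"
    using trans_tr[OF assms] by auto
next
  show "transversal_sets w Z g \<subseteq> image (tr h) ` transversal_sets w Y g"
  proof
    fix T assume T: "T \<in> transversal_sets w Z g"
    have "tr (inv_into Y h) ` T \<in> transversal_sets w Y g"
      using trans_tr[OF bij_betw_inv_into[OF assms] T] .
    moreover have "T = tr h ` tr (inv_into Y h) ` T"
      using inv_tr2[OF assms, of T] T by (auto simp: transversal_sets_def hpoints_def)
    ultimately show "T \<in> image (tr h) ` transversal_sets w Y g" by blast
  qed
qed

lemma Hdesign_tr: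
  assumes bij: "bij_betw h Y Z" and H: "H_design Y g w t G"
  shows "H_design Z g w t (image (tr h) ` G)"
  unfolding H_design_def
proof (intro conjI allI impI)
  show "image (tr h) ` G \<subseteq> transversal_sets w Z g"
    using H trans_tr[OF bij] by (auto simp: H_design_def)
next
  fix S assume S: "S \<subseteq> hpoints Z g \<and> card S = t \<and> card (fst ` S) = t"
  define h' where "h' = inv_into Y h"
  have bij': "bij_betw h' Z Y" using bij_betw_inv_into[OF bij] h'_def by simp
  have inj': "inj_on h' Z" and Y: "h' ` Z = Y" using bij' by (auto simp: bij_betw_def)
  define S0 where "S0 = tr h' ` S"
  have SZ: "S \<subseteq> Z \<times> {1..g}" using S by (simp add: hpoints_def)
  have FZ: "fst ` S \<subseteq> Z" using SZ by auto
  have S0h: "S0 \<subseteq> hpoints Y g" using SZ Y by (auto simp: S0_def hpoints_def)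
  have "card S0 = t" using card_image[OF inj_on_subset[OF inj_tr[OF inj'], of S]] SZ S
    by (auto simp: S0_def)
  moreover have "fst ` S0 = h' ` fst ` S" by (force simp: S0_def)
  moreover have "card (h' ` fst ` S) = t"
    using card_image[OF inj_on_subset[OF inj', of "fst ` S"]] S FZ by auto
  ultimately have "\<exists>!b. b \<in> G \<and> S0 \<subseteq> b" using H S0h by (auto simp: H_design_def)
  then obtain T0 where T0: "T0 \<in> G" "S0 \<subseteq> T0" and uq: "\<And>b. b \<in> G \<Longrightarrow> S0 \<subseteq> b \<Longrightarrow> b = T0"
    by blast
  have GY: "\<And>b. b \<in> G \<Longrightarrow> b \<subseteq> Y \<times> UNIV"
    using H by (auto simp: H_design_def transversal_sets_def hpoints_def)
  have SS: "S = tr h ` S0" using inv_tr2[OF bij, of S] SZ by (auto simp: S0_def h'_def)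
  show "\<exists>!b. b \<in> image (tr h) ` G \<and> S \<subseteq> b"
  proof (rule ex1I[of _ "tr h ` T0"])
    show "tr h ` T0 \<in> image (tr h) ` G \<and> S \<subseteq> tr h ` T0" using T0 SS by auto
  next
    fix b assume b: "b \<in> image (tr h) ` G \<and> S \<subseteq> b"
    then obtain T1 where T1: "T1 \<in> G" "b = tr h ` T1" by auto
    have "S0 \<subseteq> tr h' ` b" using b by (auto simp: S0_def)
    also have "tr h' ` b = T1" using inv_tr1[OF bij GY[OF T1(1)]] T1 h'_def by simp
    finally have "T1 = T0" using uq T1 by blast
    then show "b = tr h ` T0" using T1 by simp
  qed
qed

lemma GS_tr:
  assumes bij: "bij_betw h Y Z" and G: "GS t w Y g G"
  shows "GS t w Z g (image (tr h) ` G)"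
proof -
  have HG: "H_design Y g w t G" using G unfolding GS_def by blast
  have dist: "\<And>b c. b \<in> G \<Longrightarrow> c \<in> G \<Longrightarrow> b \<noteq> c \<Longrightarrow> 2 * (w - t) + 1 \<le> hamming Y b c"
    using G unfolding GS_def by blast
  have GT: "G \<subseteq> transversal_sets w Y g" using HG unfolding H_design_def by blast
  have GY: "\<And>b. b \<in> G \<Longrightarrow> b \<subseteq> Y \<times> UNIV"
    using GT trans_subU by blast
  have inj: "inj_on h Y" using bij by (auto simp: bij_betw_def)
  have H2: "H_design Z g w t (image (tr h) ` G)" by (rule Hdesign_tr[OF bij HG])
  have D2: "2 * (w - t) + 1 \<le> hamming Z b c"
    if bb: "b \<in> image (tr h) ` G" and cc: "c \<in> image (tr h) ` G" and ne: "b \<noteq> c" for b c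
  proof -
    obtain b0 where b0: "b0 \<in> G" "b = tr h ` b0" using bb by blast
    obtain c0 where c0: "c0 \<in> G" "c = tr h ` c0" using cc by blast
    have "b0 \<noteq> c0" using b0 c0 ne by blast
    then have "2 * (w - t) + 1 \<le> hamming Y b0 c0" using dist b0 c0 by blast
    also have "hamming Y b0 c0 = hamming Z b c"
      using hamming_tr[OF bij GY[OF b0(1)] GY[OF c0(1)]] b0 c0 by simp
    finally show ?thesis .
  qed
  show ?thesis unfolding GS_def using H2 D2 by blast
qed



lemma trans_inj:
  assumes "T \<in> transversal_sets w Y g"
  shows "inj_on fst T"
proof (rule inj_onI)
  fix p q assume p: "p \<in> T" and q: "q \<in> T" and e: "fst p = fst q"
  obtain y a where pa: "p = (y, a)" by (cases p)
  obtain b where qb: "q = (y, b)" using e pa by (cases q) auto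
  have T: "T \<subseteq> Y \<times> {1..g}" "\<forall>y\<in>Y. card {a. (y,a)\<in>T} \<le> 1"
    using assms by (auto simp: transversal_sets_def hpoints_def)
  have y: "y \<in> Y" using T p pa by auto
  have fin: "finite {a. (y,a)\<in>T}"
    by (rule finite_subset[of _ "{1..g}"]) (use T in auto)
  have "card {a. (y,a)\<in>T} \<le> Suc 0" using T y by simp
  then have "\<forall>a1\<in>{a. (y,a)\<in>T}. \<forall>a2\<in>{a. (y,a)\<in>T}. a1 = a2"
    using card_le_Suc0_iff_eq[OF fin] by blast
  then have "a = b" using p q pa qb by blast
  then show "p = q" using pa qb by simp
qed

lemma trans_card_fst:
  assumes "T \<in> transversal_sets w Y g"
  shows "card (fst ` T) = w"
  using card_image[OF trans_inj[OF assms]] assms by (simp add: transversal_sets_def)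

lemma trans_mono:
  assumes "b \<subseteq> X" "T \<in> transversal_sets w b g"
  shows "T \<in> transversal_sets w X g"
proof -
  have T: "T \<subseteq> b \<times> {1..g}" "card T = w" "\<forall>y\<in>b. card {a. (y,a)\<in>T} \<le> 1"
    using assms(2) by (auto simp: transversal_sets_def hpoints_def)
  have "\<forall>y\<in>X. card {a. (y,a)\<in>T} \<le> 1"
  proof
    fix y assume "y \<in> X"
    show "card {a. (y,a)\<in>T} \<le> 1"
    proof (cases "y \<in> b")
      case True then show ?thesis using T by simp
    next
      case False then have "{a. (y,a)\<in>T} = {}" using T by auto
      then show ?thesis by simp
    qed
  qed
  then show ?thesis using T assms(1) by (auto simp: transversal_sets_def hpoints_def)
qed

lemma trans_restrict:
  assumes "T \<in> transversal_sets w X g" "fst ` T \<subseteq> b"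
  shows "T \<in> transversal_sets w b g"
proof -
  have T: "T \<subseteq> X \<times> {1..g}" "card T = w" "\<forall>y\<in>X. card {a. (y,a)\<in>T} \<le> 1"
    using assms(1) by (auto simp: transversal_sets_def hpoints_def)
  have "T \<subseteq> b \<times> {1..g}"
  proof
    fix p assume "p \<in> T"
    then show "p \<in> b \<times> {1..g}" using T(1) assms(2) by (cases p) auto
  qed
  moreover have "\<forall>y\<in>b. card {a. (y,a)\<in>T} \<le> 1"
  proof
    fix y assume "y \<in> b"
    show "card {a. (y,a)\<in>T} \<le> 1"
    proof (cases "y \<in> X")
      case True then show ?thesis using T by simp
    next
      case False then have "{a. (y,a)\<in>T} = {}" using T by auto
      then show ?thesis by simp
    qed
  qed
  ultimately show ?thesis using T by (auto simp: transversal_sets_def hpoints_def)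
qed

lemma bw_zero: "x \<notin> fst ` T \<Longrightarrow> block_word T x = 0"
  unfolding block_word_def by force

lemma bw_nz:
  assumes "T \<in> transversal_sets w X g" "x \<in> fst ` T"
  shows "block_word T x \<noteq> 0"
proof -
  obtain a where a: "(x, a) \<in> T" using assms(2) by force
  have a1: "a \<in> {1..g}" using trans_sub[OF assms(1)] a by auto
  have "\<And>a'. (x, a') \<in> T \<Longrightarrow> a' = a"
  proof -
    fix a' assume "(x, a') \<in> T"
    then have "(x, a') = (x, a)" using inj_onD[OF trans_inj[OF assms(1)], of "(x,a')" "(x,a)"] a by simp
    then show "a' = a" by simp
  qed
  then have th: "(THE a. (x, a) \<in> T) = a" using a by (metis the_equality)
  have ex: "\<exists>a'. (x, a') \<in> T" using a by blast
  have "block_word T x = a" unfolding block_word_def using ex th by (simp only: if_True)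
  then show ?thesis using a1 by simp
qed

lemma hamming_restrict:
  assumes "b \<subseteq> X" "fst ` T1 \<subseteq> b" "fst ` T2 \<subseteq> b"
  shows "hamming X T1 T2 = hamming b T1 T2"
proof -
  have "{x\<in>X. block_word T1 x \<noteq> block_word T2 x} = {x\<in>b. block_word T1 x \<noteq> block_word T2 x}"
  proof -
    have "block_word T1 x = block_word T2 x" if xb: "x \<notin> b" for x
    proof -
      have "x \<notin> fst ` T1" using contra_subsetD[OF assms(2) xb] .
      moreover have "x \<notin> fst ` T2" using contra_subsetD[OF assms(3) xb] .
      ultimately show ?thesis by (simp add: bw_zero)
    qed
    then show ?thesis using assms(1) by blast
  qed
  then show ?thesis unfolding hamming_def by simp
qed

lemma hamming_far:
  assumes fin: "finite X" and T1: "T1 \<in> transversal_sets w X g" and T2: "T2 \<in> transversal_sets w X g"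
    and lt: "card (fst ` T1 \<inter> fst ` T2) < t" and tw: "t \<le> w" and t0: "0 < t"
  shows "2 * (w - t) + 1 \<le> hamming X T1 T2"
proof -
  define A where "A = fst ` T1"
  define B where "B = fst ` T2"
  have AX: "A \<subseteq> X" using trans_sub[OF T1] by (auto simp: A_def)
  have BX: "B \<subseteq> X" using trans_sub[OF T2] by (auto simp: B_def)
  have cA: "card A = w" using trans_card_fst[OF T1] A_def by simp
  have cB: "card B = w" using trans_card_fst[OF T2] B_def by simp
  have finA: "finite A" and finB: "finite B" using AX BX fin finite_subset by auto
  have sub: "(A - B) \<union> (B - A) \<subseteq> {x\<in>X. block_word T1 x \<noteq> block_word T2 x}"
  proof
    fix x assume x: "x \<in> (A - B) \<union> (B - A)"
    then have "x \<in> X" using AX BX by auto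
    moreover have "block_word T1 x \<noteq> block_word T2 x"
    proof (cases "x \<in> A")
      case True
      then have "x \<notin> B" using x by auto
      then show ?thesis using bw_nz[OF T1, of x] bw_zero[of x T2] True A_def B_def by simp
    next
      case False
      then have "x \<in> B" using x by auto
      then show ?thesis using bw_nz[OF T2, of x] bw_zero[of x T1] False A_def B_def by simp
    qed
    ultimately show "x \<in> {x\<in>X. block_word T1 x \<noteq> block_word T2 x}" by blast
  qed
  have "card ((A - B) \<union> (B - A)) = card (A - B) + card (B - A)"
    by (rule card_Un_disjoint) (use finA finB in auto)
  also have "card (A - B) = w - card (A \<inter> B)" using card_Diff_subset_Int[of A B] finA cA by simp
  also have "card (B - A) = w - card (A \<inter> B)"
    using card_Diff_subset_Int[of B A] finB cB by (simp add: Int_commute)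
  finally have eq: "card ((A - B) \<union> (B - A)) = 2 * (w - card (A \<inter> B))" by simp
  have "card ((A - B) \<union> (B - A)) \<le> hamming X T1 T2"
    unfolding hamming_def by (rule card_mono) (use fin sub in auto)
  moreover have c: "card (A \<inter> B) < t" using lt unfolding A_def B_def .
  have "2 * (w - t) + 1 \<le> 2 * (w - card (A \<inter> B))" using c tw by linarith
  ultimately show ?thesis using eq by linarith
qed

lemma steiner_uniq:
  assumes "steiner_system s k X B" "b \<in> B" "b' \<in> B" "S \<subseteq> X" "card S = s" "S \<subseteq> b" "S \<subseteq> b'"
  shows "b = b'"
proof -
  have "\<forall>S. S \<subseteq> X \<and> card S = s \<longrightarrow> (\<exists>!b. b \<in> B \<and> S \<subseteq> b)"
    using assms(1) unfolding steiner_system_def by (rule conjunct2)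
  then have "\<exists>!b. b \<in> B \<and> S \<subseteq> b" using assms(4,5) by simp
  then obtain c where "\<forall>y. y \<in> B \<and> S \<subseteq> y \<longrightarrow> y = c" by (metis ex1E)
  then show ?thesis using assms(2,3,6,7) by metis
qed

lemma steiner_inter:
  assumes "steiner_system t k X C" "b \<in> C" "b' \<in> C" "b \<noteq> b'"
  shows "card (b \<inter> b') < t"
proof (rule ccontr)
  assume "\<not> card (b \<inter> b') < t"
  then have "t \<le> card (b \<inter> b')" by simp
  then obtain S where S: "S \<subseteq> b \<inter> b'" "card S = t"
    by (rule obtain_subset_with_card_n)
  have "b \<subseteq> X" using assms unfolding steiner_system_def by blast
  then have "S \<subseteq> X" using S by blast
  then have "b = b'" using steiner_uniq[OF assms(1-3), of S] S by blast
  then show False using assms(4) by simp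
qed



lemma steiner_ex1:
  assumes "steiner_system s k X B" "S \<subseteq> X" "card S = s"
  shows "\<exists>!b. b \<in> B \<and> S \<subseteq> b"
proof -
  have "\<forall>S. S \<subseteq> X \<and> card S = s \<longrightarrow> (\<exists>!b. b \<in> B \<and> S \<subseteq> b)"
    using assms(1) unfolding steiner_system_def by (rule conjunct2)
  then show ?thesis using assms(2,3) by simp
qed

theorem theorem3p2:
  fixes t w w' n g :: nat
  assumes "0 < t" "0 < w" "0 < w'" "0 < n" "0 < g"
    and "t \<le> w" "w \<le> w'"
    and "\<exists>(X::nat set) B. finite X \<and> card X = n \<and> t_resolvable t w w' X B"
    and "LGS_exists t w w' g"
  shows "LGS_exists t w n g"
proof -
  obtain X :: "nat set" and B where X: "finite X" "card X = n" and tres: "t_resolvable t w w' X B"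
    using assms(8) by blast
  have SB: "steiner_system w w' X B" using tres unfolding t_resolvable_def by blast
  obtain Pr where part: "partition_on B Pr" and cls: "\<And>C. C \<in> Pr \<Longrightarrow> steiner_system t w' X C"
    using tres unfolding t_resolvable_def by blast
  obtain Y :: "nat set" and Q where Y: "finite Y" "card Y = w'" and LQ: "LGS t w Y g Q"
    using assms(9) unfolding LGS_exists_def by blast
  have Qpart: "partition_on (transversal_sets w Y g) Q" and QGS: "\<And>G. G \<in> Q \<Longrightarrow> GS t w Y g G"
    using LQ unfolding LGS_def by blast+
  have Bsub: "b \<subseteq> X" "card b = w'" if "b \<in> B" for b
    using SB that unfolding steiner_system_def by blast+
  define hb :: "nat set \<Rightarrow> nat \<Rightarrow> nat" where "hb b = (SOME h. bij_betw h Y b)" for b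
  have hbij: "bij_betw (hb b) Y b" if b: "b \<in> B" for b
  proof -
    have "finite b" using Bsub[OF b] X(1) finite_subset by blast
    then have "\<exists>h. bij_betw h Y b" using finite_same_card_bij[OF Y(1), of b] Bsub(2)[OF b] Y(2) by simp
    then show ?thesis unfolding hb_def by (rule someI_ex)
  qed
  define Tb where "Tb b G = image (tr (hb b)) ` G" for b G
  define D where "D C G = (\<Union>b\<in>C. Tb b G)" for C G
  define PX where "PX = (\<lambda>(C, G). D C G) ` (Pr \<times> Q)"
  have F1: "GS t w b g (Tb b G)" if "b \<in> B" "G \<in> Q" for b G
    unfolding Tb_def by (rule GS_tr[OF hbij[OF that(1)] QGS[OF that(2)]])
  have F2: "transversal_sets w b g = \<Union> (Tb b ` Q)" if b: "b \<in> B" for b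
  proof -
    have "transversal_sets w b g = image (tr (hb b)) ` transversal_sets w Y g"
      by (rule trans_surj[OF hbij[OF b]])
    also have "transversal_sets w Y g = \<Union> Q" using Qpart by (simp add: partition_on_def)
    finally have e: "transversal_sets w b g = image (tr (hb b)) ` \<Union> Q" .
    have "Tb b = (\<lambda>G. image (tr (hb b)) ` G)" by (rule ext) (simp only: Tb_def)
    then show ?thesis using e by (simp only: image_Union)
  qed
  have F3: "G = G'" if b: "b \<in> B" and G: "G \<in> Q" "G' \<in> Q" and T: "T \<in> Tb b G" "T \<in> Tb b G'"
    for b G G' T
  proof -
    obtain T1 where T1: "T1 \<in> G" "T = tr (hb b) ` T1" using T(1) unfolding Tb_def by blast
    obtain T2 where T2: "T2 \<in> G'" "T = tr (hb b) ` T2" using T(2) unfolding Tb_def by blast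
    have "T1 \<in> transversal_sets w Y g" using T1(1) G(1) Qpart unfolding partition_on_def by blast
    then have T1Y: "T1 \<subseteq> Y \<times> UNIV" by (rule trans_subU)
    have "T2 \<in> transversal_sets w Y g" using T2(1) G(2) Qpart unfolding partition_on_def by blast
    then have T2Y: "T2 \<subseteq> Y \<times> UNIV" by (rule trans_subU)
    have "T1 = tr (inv_into Y (hb b)) ` T" using inv_tr1[OF hbij[OF b] T1Y] T1(2) by simp
    also have "\<dots> = T2" using inv_tr1[OF hbij[OF b] T2Y] T2(2) by simp
    finally have "T1 = T2" .
    then have "G \<inter> G' \<noteq> {}" using T1(1) T2(1) by blast
    then show "G = G'" using disjointD[OF partition_onD2[OF Qpart] G] by blast
  qed
  have F4: "T \<in> transversal_sets w X g \<and> fst ` T \<subseteq> b"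
    if b: "b \<in> B" and G: "G \<in> Q" and T: "T \<in> Tb b G" for b G T
  proof -
    have "Tb b G \<subseteq> transversal_sets w b g" using F1[OF b G] unfolding GS_def H_design_def by blast
    then have Tt: "T \<in> transversal_sets w b g" using T by blast
    have "T \<in> transversal_sets w X g" by (rule trans_mono[OF Bsub(1)[OF b] Tt])
    moreover have "fst ` T \<subseteq> b" using trans_sub[OF Tt] by auto
    ultimately show ?thesis by blast
  qed
  have PrB: "C \<subseteq> B" "C \<noteq> {}" if "C \<in> Pr" for C
    using part that unfolding partition_on_def by blast+
  have blockuniq: "b = b'" if "b \<in> B" "b' \<in> B" "T \<in> transversal_sets w X g" "fst ` T \<subseteq> b" "fst ` T \<subseteq> b'"
    for b b' T
  proof -
    have "fst ` T \<subseteq> X" using trans_sub[OF that(3)] by auto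
    then show ?thesis using steiner_uniq[OF SB that(1,2), of "fst ` T"] trans_card_fst[OF that(3)] that(4,5)
      by blast
  qed
  have classB: "C = C'" if "C \<in> Pr" "C' \<in> Pr" "b \<in> C" "b \<in> C'" for C C' b
  proof (rule ccontr)
    assume "C \<noteq> C'"
    then have "C \<inter> C' = {}" using disjointD[OF partition_onD2[OF part] that(1,2)] by blast
    then show False using that(3,4) by blast
  qed
  have partX: "partition_on (transversal_sets w X g) PX"
  proof (rule partition_onI)
    show "\<Union> PX = transversal_sets w X g"
    proof
      show "\<Union> PX \<subseteq> transversal_sets w X g"
      proof
        fix T assume "T \<in> \<Union> PX"
        then obtain C G where CG: "C \<in> Pr" "G \<in> Q" "T \<in> D C G" unfolding PX_def by blast
        then obtain b where b: "b \<in> C" "T \<in> Tb b G" unfolding D_def by blast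
        have "b \<in> B" using PrB(1)[OF CG(1)] b(1) by blast
        then show "T \<in> transversal_sets w X g" using F4[OF _ CG(2) b(2)] by blast
      qed
    next
      show "transversal_sets w X g \<subseteq> \<Union> PX"
      proof
        fix T assume T: "T \<in> transversal_sets w X g"
        have "fst ` T \<subseteq> X" using trans_sub[OF T] by auto
        moreover have "card (fst ` T) = w" by (rule trans_card_fst[OF T])
        ultimately have "\<exists>!b. b \<in> B \<and> fst ` T \<subseteq> b" using steiner_ex1[OF SB] by blast
        then obtain b where b: "b \<in> B" "fst ` T \<subseteq> b" by (metis ex1E)
        have "b \<in> \<Union> Pr" using b(1) part unfolding partition_on_def by blast
        then obtain C where C: "C \<in> Pr" "b \<in> C" by blast
        have "T \<in> transversal_sets w b g" by (rule trans_restrict[OF T b(2)])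
        then obtain G where G: "G \<in> Q" "T \<in> Tb b G" using F2[OF b(1)] by blast
        have "T \<in> D C G" unfolding D_def using C(2) G(2) by blast
        moreover have "D C G \<in> PX" unfolding PX_def using C(1) G(1) by blast
        ultimately show "T \<in> \<Union> PX" by blast
      qed
    qed
  next
    fix p q assume p: "p \<in> PX" and q: "q \<in> PX" and ne: "p \<noteq> q"
    obtain C G where CG: "C \<in> Pr" "G \<in> Q" "p = D C G" using p unfolding PX_def by blast
    obtain C' G' where CG': "C' \<in> Pr" "G' \<in> Q" "q = D C' G'" using q unfolding PX_def by blast
    show "disjnt p q"
    proof (rule ccontr)
      assume "\<not> disjnt p q"
      then obtain T where T: "T \<in> D C G" "T \<in> D C' G'" unfolding disjnt_def CG(3) CG'(3) by blast
      obtain b where b: "b \<in> C" "T \<in> Tb b G" using T(1) unfolding D_def by blast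
      obtain b' where b': "b' \<in> C'" "T \<in> Tb b' G'" using T(2) unfolding D_def by blast
      have bB: "b \<in> B" using PrB(1)[OF CG(1)] b(1) by blast
      have bB': "b' \<in> B" using PrB(1)[OF CG'(1)] b'(1) by blast
      have f: "T \<in> transversal_sets w X g" "fst ` T \<subseteq> b" using F4[OF bB CG(2) b(2)] by blast+
      have f': "fst ` T \<subseteq> b'" using F4[OF bB' CG'(2) b'(2)] by blast
      have bb: "b = b'" by (rule blockuniq[OF bB bB' f f'])
      have CC: "C = C'" using classB[OF CG(1) CG'(1) b(1)] b'(1) bb by blast
      have GG: "G = G'" using F3[OF bB CG(2) CG'(2) b(2)] b'(2) bb by blast
      show False using ne CG(3) CG'(3) CC GG by simp
    qed
  next
    show "{} \<notin> PX"
    proof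
      assume "{} \<in> PX"
      then obtain C G where CG: "C \<in> Pr" "G \<in> Q" "D C G = {}" unfolding PX_def by blast
      obtain b where b: "b \<in> C" using PrB(2)[OF CG(1)] by blast
      have "G \<noteq> {}" using partition_onD3[OF Qpart] CG(2) by blast
      then obtain T0 where "T0 \<in> G" by blast
      then have "tr (hb b) ` T0 \<in> Tb b G" unfolding Tb_def by blast
      then have "tr (hb b) ` T0 \<in> D C G" unfolding D_def using b by blast
      then show False using CG(3) by simp
    qed
  qed
  have GSX: "GS t w X g (D C G)" if C: "C \<in> Pr" and G: "G \<in> Q" for C G
  proof -
    have CB: "C \<subseteq> B" by (rule PrB(1)[OF C])
    have memD: "\<exists>b\<in>C. T \<in> Tb b G" if "T \<in> D C G" for T using that unfolding D_def by blast
    have sub: "D C G \<subseteq> transversal_sets w X g"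
    proof
      fix T assume "T \<in> D C G"
      then obtain b where b: "b \<in> C" "T \<in> Tb b G" using memD by blast
      show "T \<in> transversal_sets w X g" using F4[OF _ G b(2)] CB b(1) by blast
    qed
    have ex1: "\<exists>!T. T \<in> D C G \<and> S \<subseteq> T"
      if S: "S \<subseteq> hpoints X g \<and> card S = t \<and> card (fst ` S) = t" for S
    proof -
      have SX: "S \<subseteq> X \<times> {1..g}" using S unfolding hpoints_def by blast
      have fX: "fst ` S \<subseteq> X" using SX by auto
      have "\<forall>S'. S' \<subseteq> X \<and> card S' = t \<longrightarrow> (\<exists>!b. b \<in> C \<and> S' \<subseteq> b)"
        using cls[OF C] unfolding steiner_system_def by (rule conjunct2)
      then have "\<exists>!b. b \<in> C \<and> fst ` S \<subseteq> b" using fX S by simp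
      then obtain b where b: "b \<in> C" "fst ` S \<subseteq> b" and bu: "\<And>b'. b' \<in> C \<Longrightarrow> fst ` S \<subseteq> b' \<Longrightarrow> b' = b"
        by (metis ex1E)
      have bB: "b \<in> B" using CB b(1) by blast
      have Sb: "S \<subseteq> hpoints b g"
      proof
        fix p assume "p \<in> S"
        then show "p \<in> hpoints b g" using SX b(2) unfolding hpoints_def by (cases p) force
      qed
      have "H_design b g w t (Tb b G)" using F1[OF bB G] unfolding GS_def by blast
      then have "\<forall>S'. S' \<subseteq> hpoints b g \<and> card S' = t \<and> card (fst ` S') = t \<longrightarrow> (\<exists>!T. T \<in> Tb b G \<and> S' \<subseteq> T)"
        unfolding H_design_def by (rule conjunct2)
      then have "\<exists>!T. T \<in> Tb b G \<and> S \<subseteq> T" using Sb S by simp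
      then obtain T where T: "T \<in> Tb b G" "S \<subseteq> T" and Tu: "\<And>T'. T' \<in> Tb b G \<Longrightarrow> S \<subseteq> T' \<Longrightarrow> T' = T"
        by (metis ex1E)
      show ?thesis
      proof (rule ex1I[of _ T])
        show "T \<in> D C G \<and> S \<subseteq> T" using T b(1) unfolding D_def by blast
      next
        fix T' assume T': "T' \<in> D C G \<and> S \<subseteq> T'"
        then obtain b' where b': "b' \<in> C" "T' \<in> Tb b' G" using memD by blast
        have "fst ` T' \<subseteq> b'" using F4[OF _ G b'(2)] CB b'(1) by blast
        moreover have "fst ` S \<subseteq> fst ` T'" using T' by blast
        ultimately have "b' = b" using bu[OF b'(1)] by blast
        then show "T' = T" using Tu b'(2) T' by blast
      qed
    qed
    have dist: "2 * (w - t) + 1 \<le> hamming X T1 T2"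
      if T1: "T1 \<in> D C G" and T2: "T2 \<in> D C G" and ne: "T1 \<noteq> T2" for T1 T2
    proof -
      obtain b1 where b1: "b1 \<in> C" "T1 \<in> Tb b1 G" using memD T1 by blast
      obtain b2 where b2: "b2 \<in> C" "T2 \<in> Tb b2 G" using memD T2 by blast
      have b1B: "b1 \<in> B" and b2B: "b2 \<in> B" using CB b1(1) b2(1) by blast+
      have f1: "T1 \<in> transversal_sets w X g" "fst ` T1 \<subseteq> b1" using F4[OF b1B G b1(2)] by blast+
      have f2: "T2 \<in> transversal_sets w X g" "fst ` T2 \<subseteq> b2" using F4[OF b2B G b2(2)] by blast+
      show ?thesis
      proof (cases "b1 = b2")
        case True
        have "\<forall>b\<in>Tb b1 G. \<forall>c\<in>Tb b1 G. b \<noteq> c \<longrightarrow> 2 * (w - t) + 1 \<le> hamming b1 b c"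
          using F1[OF b1B G] unfolding GS_def by (rule conjunct2)
        then have "2 * (w - t) + 1 \<le> hamming b1 T1 T2" using b1(2) b2(2) True ne by blast
        also have "hamming b1 T1 T2 = hamming X T1 T2"
          using hamming_restrict[OF Bsub(1)[OF b1B] f1(2)] f2(2) True by simp
        finally show ?thesis .
      next
        case False
        have "card (b1 \<inter> b2) < t" by (rule steiner_inter[OF cls[OF C] b1(1) b2(1) False])
        moreover have "card (fst ` T1 \<inter> fst ` T2) \<le> card (b1 \<inter> b2)"
        proof (rule card_mono)
          show "finite (b1 \<inter> b2)" using Bsub(1)[OF b1B] X(1) finite_subset by blast
          show "fst ` T1 \<inter> fst ` T2 \<subseteq> b1 \<inter> b2" using f1(2) f2(2) by blast
        qed
        ultimately have "card (fst ` T1 \<inter> fst ` T2) < t" by linarith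
        then show ?thesis using hamming_far[OF X(1) f1(1) f2(1) _ assms(6) assms(1)] by blast
      qed
    qed
    show ?thesis unfolding GS_def H_design_def using sub ex1 dist by blast
  qed
  have "LGS t w X g PX"
    unfolding LGS_def
  proof (intro conjI ballI)
    show "partition_on (transversal_sets w X g) PX" by (rule partX)
  next
    fix P assume "P \<in> PX"
    then obtain C G where "C \<in> Pr" "G \<in> Q" "P = D C G" unfolding PX_def by blast
    then show "GS t w X g P" using GSX by blast
  qed
  then show ?thesis unfolding LGS_exists_def using X by blast
qed

end
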